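(* The fixed points satisfy $\eta_1<\eta_0$.
   Context: Parameters $a,b,p,q\in(0,1)$ with $a+b\ne1$. $\alpha_0(z)=(1-p)(a+b-1)z+1-b+pb$, $\alpha_1(z)=(1-q)(1-a-b)z+b+q-bq$, $r_0(z)=\frac{(a+b-1)z+1-b}{\alpha_0(z)}$, $r_1(z)=\frac{q(a+b-1)z+q-qb}{\alpha_1(z)}$ for $z\in[0,1]$. $\eta_0$ and $\eta_1$ denote the unique fixed points in $[0,1]$ of $r_0$ and $r_1$ respectively. *)

theory Defs
  imports Complex_Main
begin

definition alpha0 :: "real \<Rightarrow> real \<Rightarrow> real \<Rightarrow> real \<Rightarrow> real" where
  "alpha0 a b p z = (1 - p) * (a + b - 1) * z + 1 - b + p * b"

definition alpha1 :: "real \<Rightarrow> real \<Rightarrow> real \<Rightarrow> real \<Rightarrow> real" where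
  "alpha1 a b q z = (1 - q) * (1 - a - b) * z + b + q - b * q"

definition r0 :: "real \<Rightarrow> real \<Rightarrow> real \<Rightarrow> real \<Rightarrow> real" where
  "r0 a b p z = ((a + b - 1) * z + 1 - b) / alpha0 a b p z"

definition r1 :: "real \<Rightarrow> real \<Rightarrow> real \<Rightarrow> real \<Rightarrow> real" where
  "r1 a b q z = (q * (a + b - 1) * z + q - q * b) / alpha1 a b q z"

definition eta0 :: "real \<Rightarrow> real \<Rightarrow> real \<Rightarrow> real" where
  "eta0 a b p = (THE z. z \<in> {0..1} \<and> r0 a b p z = z)"

definition eta1 :: "real \<Rightarrow> real \<Rightarrow> real \<Rightarrow> real" where
  "eta1 a b q = (THE z. z \<in> {0..1} \<and> r1 a b q z = z)"

end

theory Submission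
  imports Defs
begin

lemma quad_unique:
  fixes A B C :: real
  assumes "C < 0" "A + B + C > 0"
  shows "\<exists>!z. z \<in> {0..1} \<and> A*z^2 + B*z + C = 0"
proof -
  let ?g = "\<lambda>z::real. A*z^2 + B*z + C"
  have ex: "\<exists>z\<ge>0. z \<le> 1 \<and> ?g z = 0"
    by (rule IVT) (use assms in \<open>auto intro!: continuous_intros\<close>)
  have un: "x = y" if x: "x \<in> {0..1}" "?g x = 0" and y: "y \<in> {0..1}" "?g y = 0" for x y
  proof (rule ccontr)
    assume ne: "x \<noteq> y"
    have "(x - y) * (A*(x+y) + B) = 0" using x(2) y(2) by (simp add: algebra_simps power2_eq_square)
    hence hB: "B = - A*(x+y)" using ne by simp
    have hC: "C = A*x*y" using x(2) hB by (simp add: algebra_simps power2_eq_square)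
    have s: "A + B + C = A*((1-x)*(1-y))" using hB hC by (simp add: algebra_simps)
    have p1: "x*y \<ge> 0" using x y by auto
    have p2: "(1-x)*(1-y) \<ge> 0" using x y by auto
    have "A < 0"
    proof (rule ccontr)
      assume "\<not> A < 0" hence "A \<ge> 0" by simp
      hence "A*(x*y) \<ge> 0" using p1 by simp
      thus False using hC assms(1) by (simp add: mult.assoc)
    qed
    hence "A*((1-x)*(1-y)) \<le> 0" using p2 by (simp add: mult_nonpos_nonneg)
    thus False using s assms(2) by simp
  qed
  show ?thesis using ex un by (metis atLeastAtMost_iff)
qed

lemma conv_pos:
  fixes z P Q :: real
  assumes "z \<in> {0..1}" "P > 0" "Q > 0"
  shows "(1-z)*P + z*Q > 0"
proof (cases "z < 1")
  case True
  hence "(1-z)*P > 0" using assms by simp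
  moreover have "z*Q \<ge> 0" using assms by simp
  ultimately show ?thesis by linarith
next
  case False
  hence "z = 1" using assms by simp
  thus ?thesis using assms by simp
qed

theorem lemma2p32:
  fixes a b p q :: real
  assumes "a \<in> {0<..<1}" and "b \<in> {0<..<1}" and "p \<in> {0<..<1}" and "q \<in> {0<..<1}"
    and "a + b \<noteq> 1"
  shows "eta1 a b q < eta0 a b p"
proof -
  define c where "c = a + b - 1"
  have a: "0 < a" "a < 1" and b: "0 < b" "b < 1" and p: "0 < p" "p < 1" and q: "0 < q" "q < 1"
    using assms by auto
  define f0 where "f0 z = (1-p)*c*z^2 + (1-b+p*b-c)*z + (-(1-b))" for z
  define f1 where "f1 z = (1-q)*(-c)*z^2 + (b+q-b*q-q*c)*z + (-(q*(1-b)))" for z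
  have al0: "alpha0 a b p z > 0" if "z \<in> {0..1}" for z
  proof -
    have "alpha0 a b p z = (1-z)*(1-b+p*b) + z*((1-p)*a + p)"
      unfolding alpha0_def by (simp add: algebra_simps)
    moreover have "1-b+p*b > 0" using b p by (simp add: add_pos_nonneg)
    moreover have "(1-p)*a + p > 0" using a p by (simp add: add_nonneg_pos)
    ultimately show ?thesis using conv_pos[OF that] by metis
  qed
  have al1: "alpha1 a b q z > 0" if "z \<in> {0..1}" for z
  proof -
    have "alpha1 a b q z = (1-z)*(b+q-b*q) + z*(1-a*(1-q))"
      unfolding alpha1_def by (simp add: algebra_simps)
    moreover have "b+q-b*q > 0"
    proof -
      have "q*(1-b) > 0" using b q by simp
      moreover have "b+q-b*q = b + q*(1-b)" by (simp add: algebra_simps)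
      ultimately show ?thesis using b by linarith
    qed
    moreover have "1-a*(1-q) > 0"
    proof -
      have "a*(1-q) \<le> a*1" using a q by (intro mult_left_mono) auto
      thus ?thesis using a by linarith
    qed
    ultimately show ?thesis using conv_pos[OF that] by metis
  qed
  have N: "c*z + 1 - b > 0" if "z \<in> {0..1}" for z
  proof -
    have "c*z + 1 - b = (1-z)*(1-b) + z*a" unfolding c_def by (simp add: algebra_simps)
    thus ?thesis using conv_pos[OF that, of "1-b" a] a b by simp
  qed
  have e0: "r0 a b p z = z \<longleftrightarrow> f0 z = 0" if "z \<in> {0..1}" for z
  proof -
    have "r0 a b p z = z \<longleftrightarrow> (a + b - 1) * z + 1 - b = z * alpha0 a b p z"
      unfolding r0_def using al0[OF that] by (simp add: divide_eq_eq mult.commute)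
    also have "\<dots> \<longleftrightarrow> f0 z = 0"
    proof -
      have "z * alpha0 a b p z - ((a + b - 1) * z + 1 - b) = f0 z" unfolding f0_def alpha0_def c_def
        by (simp add: algebra_simps power2_eq_square)
      thus ?thesis by linarith
    qed
    finally show ?thesis .
  qed
  have e1: "r1 a b q z = z \<longleftrightarrow> f1 z = 0" if "z \<in> {0..1}" for z
  proof -
    have "r1 a b q z = z \<longleftrightarrow> q * (a + b - 1) * z + q - q * b = z * alpha1 a b q z"
      unfolding r1_def using al1[OF that] by (simp add: divide_eq_eq mult.commute)
    also have "\<dots> \<longleftrightarrow> f1 z = 0"
    proof -
      have "z * alpha1 a b q z - (q * (a + b - 1) * z + q - q * b) = f1 z" unfolding f1_def alpha1_def c_def
        by (simp add: algebra_simps power2_eq_square)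
      thus ?thesis by linarith
    qed
    finally show ?thesis .
  qed
  have u0: "\<exists>!z. z \<in> {0..1} \<and> f0 z = 0"
    unfolding f0_def by (rule quad_unique) (use a b p in \<open>auto simp: c_def algebra_simps\<close>)
  have u1: "\<exists>!z. z \<in> {0..1} \<and> f1 z = 0"
    unfolding f1_def by (rule quad_unique) (use a b q in \<open>auto simp: c_def algebra_simps intro: mult_pos_pos\<close>)
  have u0': "\<exists>!z. z \<in> {0..1} \<and> r0 a b p z = z" using u0 e0 by blast
  have u1': "\<exists>!z. z \<in> {0..1} \<and> r1 a b q z = z" using u1 e1 by blast
  define x where "x = eta0 a b p"
  have x: "x \<in> {0..1}" "r0 a b p x = x"
    using theI'[OF u0'] unfolding x_def eta0_def by auto
  have ineq: "q * alpha0 a b p x < alpha1 a b q x"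
  proof -
    have "alpha1 a b q x - q * alpha0 a b p x = (1-p*q)*(b - c*x)"
      unfolding alpha0_def alpha1_def c_def by (simp add: algebra_simps)
    moreover have "1 - p*q > 0"
    proof -
      have "p*q < p*1" using p q by (intro mult_strict_left_mono) auto
      thus ?thesis using p by linarith
    qed
    moreover have "b - c*x > 0"
    proof -
      have "b - c*x = (1-x)*b + x*(1-a)" unfolding c_def by (simp add: algebra_simps)
      thus ?thesis using conv_pos[OF x(1), of b "1-a"] a b by simp
    qed
    ultimately have "(1-p*q)*(b - c*x) > 0" by simp
    thus ?thesis using \<open>alpha1 a b q x - q * alpha0 a b p x = (1-p*q)*(b - c*x)\<close> by linarith
  qed
  have "r1 a b q x < r0 a b p x"
  proof -
    have A: "alpha0 a b p x > 0" "alpha1 a b q x > 0" using al0 al1 x(1) by auto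
    have Nx: "(a+b-1)*x + 1 - b > 0" using N[OF x(1)] by (simp add: c_def)
    have "r1 a b q x = q*((a+b-1)*x + 1 - b) / alpha1 a b q x"
      unfolding r1_def by (simp add: algebra_simps)
    also have "\<dots> < ((a+b-1)*x + 1 - b) / alpha0 a b p x"
    proof -
      have "((a+b-1)*x + 1 - b)*(q*alpha0 a b p x) < ((a+b-1)*x + 1 - b)*alpha1 a b q x"
        by (rule mult_strict_left_mono[OF ineq Nx])
      thus ?thesis using A by (simp add: divide_simps algebra_simps)
    qed
    finally show ?thesis unfolding r0_def by simp
  qed
  hence lt: "r1 a b q x < x" using x by simp
  have f1x: "f1 x > 0"
  proof -
    have "q * (a + b - 1) * x + q - q * b < x * alpha1 a b q x"
      using lt al1[OF x(1)] unfolding r1_def by (simp add: divide_less_eq mult.commute)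
    thus ?thesis unfolding f1_def alpha1_def c_def by (simp add: algebra_simps power2_eq_square)
  qed
  have "\<exists>w\<ge>0. w \<le> x \<and> f1 w = 0"
    by (rule IVT) (use x f1x q b in \<open>auto simp: f1_def intro!: continuous_intros mult_pos_pos\<close>)
  then obtain w where w: "0 \<le> w" "w \<le> x" "f1 w = 0" by blast
  have w01: "w \<in> {0..1}" using w x by auto
  have "eta1 a b q = w" unfolding eta1_def
    by (rule the1_equality[OF u1']) (use w01 e1 w in auto)
  moreover have "w \<noteq> x" using w f1x by auto
  ultimately show ?thesis using w x_def by simp
qed

end
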